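(* Let $T_n=T(x_1\dots x_n,k)$ with $x_1,\dots,x_n$ i.i.d. uniform on $\{B,b,R,r\}$ and $k$ uniform on $\{1,\dots,n\}$. Then for all $t>0$, $$\mathbb P\big[|\partial T_n|\ge t\sqrt n\big]\le 2\exp\!\left(-\frac{t^2}{32}\right),$$ where $|\partial T_n|$ is the number of boundary vertices of $T_n$.
   Context: Necklace construction (Sheffield). Given a finite word $X=x_1\dots x_n$ in $\{B,b,R,r\}$, build inductively disc triangulations $D_0\subset\dots\subset D_n$ in the closed upper half-plane with blue/red vertices and an active edge with blue endpoint $b_j$ and red endpoint $r_j$; initially non-positive integers are blue, positive integers red, $b_0=0,r_0=1$. Step according to $x_{j+1}$: (B) new blue vertex $b_{j+1}$, triangle $(b_j,r_j,b_{j+1})$, $r_{j+1}=r_j$; (R) new red vertex $r_{j+1}$, triangle $(b_j,r_j,r_{j+1})$, $b_{j+1}=b_j$; (b) $b_{j+1}$ = counterclockwise boundary neighbour of $b_j$ (or $m-1$, adding edge $[m-1,m]$, if $b_j=m\in\mathbb Z$), triangle $(b_{j+1},b_j,r_j)$, $r_{j+1}=r_j$; (r) $r_{j+1}$ = clockwise boundary neighbour of $r_j$ (or $m+1$, adding $[m,m+1]$, if $r_j=m\in\mathbb Z$), triangle $(b_j,r_j,r_{j+1})$, $b_{j+1}=b_j$. $T_+(X)$ is the disc triangulation $D_n$ (consisting of the $n$ triangles) rooted at the first triangle; $T(X,k)$ is $T_+(X)$ rerooted at the triangle created at step $k$. $\partial T_n$ is the set of vertices on the topological boundary of the support (union of the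 $n$ triangles) of $T_n$. *)

theory Defs
  imports "HOL-Probability.Probability"
begin

datatype letter = LB | Lb | LR | Lr

lemma UNIV_letter: "(UNIV :: letter set) = {LB, Lb, LR, Lr}"
  by (auto intro: letter.exhaust)

instance letter :: finite
  by standard (simp add: UNIV_letter)

text \<open>Vertices: the integer vertices on the real line (non-positive = blue,
  positive = red), and the vertex created at step j (j \<ge> 1).\<close>
datatype vtx = Z int | V nat

definition is_blue :: "letter list \<Rightarrow> vtx \<Rightarrow> bool" where
  "is_blue xs v = (case v of Z m \<Rightarrow> m \<le> 0 | V j \<Rightarrow> xs ! (j - 1) = LB)"

text \<open>State of the disc triangulation D_j:
  \<^item> bl: the part of the upper boundary path lying left of the active edge,
    listed from the active blue endpoint b_j going counterclockwise (leftwards);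
  \<^item> rl: the part of the upper boundary path right of the active edge,
    listed from the active red endpoint r_j going clockwise (rightwards);
  \<^item> tris: the triangles created so far, in order of creation.
  The full boundary of the (closed upper half-plane) disc consists of this
  upper path together with the segment of the real line between its ends.\<close>
type_synonym tri = "vtx \<times> vtx \<times> vtx"
type_synonym state = "vtx list \<times> vtx list \<times> tri list"

definition init_state :: state where
  "init_state = ([Z 0], [Z 1], [])"

fun step :: "nat \<Rightarrow> letter \<Rightarrow> state \<Rightarrow> state" where
  "step j LB (bs, rs, ts) =
     (V j # bs, rs, ts @ [(hd bs, hd rs, V j)])"
| "step j LR (bs, rs, ts) =
     (bs, V j # rs, ts @ [(hd bs, hd rs, V j)])"
| "step j Lb (bs, rs, ts) =
     (case hd bs of
        Z m \<Rightarrow> (Z (m - 1) # tl bs, rs, ts @ [(Z (m - 1), hd bs, hd rs)])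
      | V i \<Rightarrow> (tl bs, rs, ts @ [(hd (tl bs), hd bs, hd rs)]))"
| "step j Lr (bs, rs, ts) =
     (case hd rs of
        Z m \<Rightarrow> (bs, Z (m + 1) # tl rs, ts @ [(hd bs, hd rs, Z (m + 1))])
      | V i \<Rightarrow> (bs, tl rs, ts @ [(hd bs, hd rs, hd (tl rs))]))"

fun build :: "nat \<Rightarrow> letter list \<Rightarrow> state \<Rightarrow> state" where
  "build j [] s = s"
| "build j (x # xs) s = build (Suc j) xs (step (Suc j) x s)"

definition disc :: "letter list \<Rightarrow> state" where
  "disc xs = build 0 xs init_state"

definition tri_vertices :: "tri \<Rightarrow> vtx set" where
  "tri_vertices t = (case t of (a, b, c) \<Rightarrow> {a, b, c})"

definition disc_triangles :: "state \<Rightarrow> tri list" where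
  "disc_triangles s = snd (snd s)"

text \<open>Vertices on the topological boundary of the support (union of the
  triangles): the upper boundary path, together with all vertices lying on the
  real line (integer vertices of triangles).\<close>
definition boundary_vertices :: "state \<Rightarrow> vtx set" where
  "boundary_vertices s =
     (if disc_triangles s = [] then {}
      else set (fst s) \<union> set (fst (snd s)) \<union>
           {v. (\<exists>i. v = Z i) \<and> (\<exists>t\<in>set (disc_triangles s). v \<in> tri_vertices t)})"

text \<open>Rooted triangulations: the disc together with the index of the root
  triangle (triangle created at that step).\<close>
type_synonym rooted = "state \<times> nat"

definition T_plus :: "letter list \<Rightarrow> rooted" where
  "T_plus xs = (disc xs, 1)"

definition T :: "letter list \<Rightarrow> nat \<Rightarrow> rooted" where
  "T xs k = (disc xs, k)"

definition bdry :: "rooted \<Rightarrow> vtx set" where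
  "bdry T' = boundary_vertices (fst T')"

definition word_root_pmf :: "nat \<Rightarrow> (letter list \<times> nat) pmf" where
  "word_root_pmf n = pair_pmf (pmf_of_set {xs. length xs = n}) (pmf_of_set {1..n})"

end

theory Submission
  imports Defs
begin


type_synonym cnt = "nat \<times> nat \<times> nat \<times> nat"

fun upd :: "letter \<Rightarrow> cnt \<Rightarrow> cnt" where
  "upd LB (h,a,h',a') = (Suc h,a,h',a')"
| "upd Lb (h,a,h',a') = (if 0 < h then (h - 1,a,h',a') else (h,Suc a,h',a'))"
| "upd LR (h,a,h',a') = (h,a,Suc h',a')"
| "upd Lr (h,a,h',a') = (if 0 < h' then (h,a,h' - 1,a') else (h,a,h',Suc a'))"

fun run :: "letter list \<Rightarrow> cnt \<Rightarrow> cnt" where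
  "run [] c = c"
| "run (x # xs) c = run xs (upd x c)"

fun tot :: "cnt \<Rightarrow> nat" where
  "tot (h,a,h',a') = h + a + h' + a'"

definition rel :: "state \<Rightarrow> cnt \<Rightarrow> bool" where
  "rel s c = (case c of (h,a,h',a') \<Rightarrow> \<exists>vb vr. fst s = map V vb @ [Z (- int a)] \<and> length vb = h \<and>
      fst (snd s) = map V vr @ [Z (1 + int a')] \<and> length vr = h' \<and>
      (\<forall>tr\<in>set (snd (snd s)). \<forall>i. Z i \<in> tri_vertices tr \<longrightarrow> - int a \<le> i \<and> i \<le> 1 + int a'))"

lemma hdZ: "hd (map V vb @ [Z m]) = Z i \<Longrightarrow> i = m"
  by (cases vb) auto

lemma relI:
  assumes "bs = map V vb @ [Z (- int a)]" "length vb = h" "rs = map V vr @ [Z (1 + int a')]"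
    "length vr = h'" "\<forall>tr\<in>set ts. \<forall>i. Z i \<in> tri_vertices tr \<longrightarrow> - int a \<le> i \<and> i \<le> 1 + int a'"
  shows "rel (bs, rs, ts) (h, a, h', a')"
  unfolding rel_def using assms by auto

lemma rel_step:
  assumes "rel s c" shows "rel (step j x s) (upd x c)"
proof -
  obtain bs rs ts where s: "s = (bs, rs, ts)" by (cases s) auto
  obtain h a h' a' where c: "c = (h, a, h', a')" by (cases c) auto
  from assms obtain vb vr where bs: "bs = map V vb @ [Z (- int a)]" and lb: "length vb = h"
    and rs: "rs = map V vr @ [Z (1 + int a')]" and lr: "length vr = h'"
    and tr: "\<forall>tr\<in>set ts. \<forall>i. Z i \<in> tri_vertices tr \<longrightarrow> - int a \<le> i \<and> i \<le> 1 + int a'"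
    unfolding rel_def s c by auto
  have hb: "\<And>i. hd bs = Z i \<Longrightarrow> i = - int a" using bs hdZ by blast
  have hr: "\<And>i. hd rs = Z i \<Longrightarrow> i = 1 + int a'" using rs hdZ by blast
  define ok where "ok = (\<lambda>A A' v. \<forall>i. v = Z i \<longrightarrow> - int A \<le> i \<and> i \<le> 1 + int A')"
  have okI: "\<forall>tr\<in>set (ts @ [(u1,u2,u3)]). \<forall>i. Z i \<in> tri_vertices tr \<longrightarrow> - int A \<le> i \<and> i \<le> 1 + int A'"
    if "a \<le> A" "a' \<le> A'" "ok A A' u1" "ok A A' u2" "ok A A' u3" for u1 u2 u3 A A'
  proof (intro ballI allI impI)
    fix tr i assume tr1: "tr \<in> set (ts @ [(u1,u2,u3)])" and zi: "Z i \<in> tri_vertices tr"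
    from tr1 consider "tr \<in> set ts" | "tr = (u1,u2,u3)" by auto
    then show "- int A \<le> i \<and> i \<le> 1 + int A'"
    proof cases
      case 1
      with tr zi have "- int a \<le> i \<and> i \<le> 1 + int a'" by blast
      with that(1,2) show ?thesis by linarith
    next
      case 2
      with zi have "Z i = u1 \<or> Z i = u2 \<or> Z i = u3" by (auto simp: tri_vertices_def)
      with that(3,4,5) show ?thesis unfolding ok_def by metis
    qed
  qed
  have okb: "ok a a' (hd bs)" using hb unfolding ok_def by auto
  have okr: "ok a a' (hd rs)" using hr unfolding ok_def by auto
  have okV: "ok A A' (V j)" for A A' unfolding ok_def by auto
  show ?thesis
  proof (cases x)
    case LB
    have "step j x s = (V j # bs, rs, ts @ [(hd bs, hd rs, V j)])" by (simp add: s LB)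
    moreover have "upd x c = (Suc h, a, h', a')" by (simp add: c LB)
    ultimately show ?thesis
      by (simp only:) (rule relI[where vb="j # vb" and vr=vr], use bs lb rs lr okI[OF order_refl order_refl okb okr okV] in auto)
  next
    case LR
    have "step j x s = (bs, V j # rs, ts @ [(hd bs, hd rs, V j)])" by (simp add: s LR)
    moreover have "upd x c = (h, a, Suc h', a')" by (simp add: c LR)
    ultimately show ?thesis
      by (simp only:) (rule relI[where vb=vb and vr="j # vr"], use bs lb rs lr okI[OF order_refl order_refl okb okr okV] in auto)
  next
    case Lb
    show ?thesis
    proof (cases vb)
      case Nil
      have hbZ: "hd bs = Z (- int a)" "tl bs = []" using bs Nil by auto
      have "step j x s = (Z (- int a - 1) # tl bs, rs, ts @ [(Z (- int a - 1), hd bs, hd rs)])"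
        by (simp add: s Lb hbZ)
      moreover have "upd x c = (h, Suc a, h', a')" using lb Nil by (simp add: c Lb)
      moreover have "ok (Suc a) a' (Z (- int a - 1))" unfolding ok_def by auto
      moreover have "ok (Suc a) a' (hd bs)" using hbZ unfolding ok_def by auto
      moreover have "ok (Suc a) a' (hd rs)" using okr unfolding ok_def by auto
      ultimately show ?thesis
        by (simp only:) (rule relI[where vb="[]" and vr=vr], use bs lb rs lr hbZ Nil okI[of "Suc a" a'] in auto)
    next
      case (Cons v vb')
      have hbV: "hd bs = V v" "tl bs = map V vb' @ [Z (- int a)]" using bs Cons by auto
      have okt: "ok a a' (hd (tl bs))" unfolding ok_def
      proof (intro allI impI)
        fix i assume "hd (tl bs) = Z i"
        hence "i = - int a" using hbV(2) hdZ by metis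
        thus "- int a \<le> i \<and> i \<le> 1 + int a'" by simp
      qed
      have "step j x s = (tl bs, rs, ts @ [(hd (tl bs), hd bs, hd rs)])"
        by (simp add: s Lb hbV)
      moreover have "upd x c = (h - 1, a, h', a')" using lb Cons by (simp add: c Lb)
      ultimately show ?thesis
        by (simp only:) (rule relI[where vb=vb' and vr=vr], use hbV lb rs lr Cons okI[OF order_refl order_refl okt okb okr] in auto)
    qed
  next
    case Lr
    show ?thesis
    proof (cases vr)
      case Nil
      have hrZ: "hd rs = Z (1 + int a')" "tl rs = []" using rs Nil by auto
      have "step j x s = (bs, Z (1 + int a' + 1) # tl rs, ts @ [(hd bs, hd rs, Z (1 + int a' + 1))])"
        by (simp add: s Lr hrZ)
      moreover have "upd x c = (h, a, h', Suc a')" using lr Nil by (simp add: c Lr)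
      moreover have "ok a (Suc a') (Z (1 + int a' + 1))" unfolding ok_def by auto
      moreover have "ok a (Suc a') (hd rs)" using hrZ unfolding ok_def by auto
      moreover have "ok a (Suc a') (hd bs)" using okb unfolding ok_def by auto
      ultimately show ?thesis
        by (simp only:) (rule relI[where vb=vb and vr="[]"], use bs lb rs lr hrZ Nil okI[of a "Suc a'"] in auto)
    next
      case (Cons v vr')
      have hrV: "hd rs = V v" "tl rs = map V vr' @ [Z (1 + int a')]" using rs Cons by auto
      have okt: "ok a a' (hd (tl rs))" unfolding ok_def
      proof (intro allI impI)
        fix i assume "hd (tl rs) = Z i"
        hence "i = 1 + int a'" using hrV(2) hdZ by metis
        thus "- int a \<le> i \<and> i \<le> 1 + int a'" by simp
      qed
      have "step j x s = (bs, tl rs, ts @ [(hd bs, hd rs, hd (tl rs))])"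
        by (simp add: s Lr hrV)
      moreover have "upd x c = (h, a, h' - 1, a')" using lr Cons by (simp add: c Lr)
      ultimately show ?thesis
        by (simp only:) (rule relI[where vb=vb and vr=vr'], use hrV bs lb lr Cons okI[OF order_refl order_refl okb okr okt] in auto)
    qed
  qed
qed

lemma rel_build: "rel s c \<Longrightarrow> rel (build j xs s) (run xs c)"
proof (induction xs arbitrary: j s c)
  case (Cons x xs)
  show ?case using Cons.IH[OF rel_step[OF Cons.prems]] by simp
qed simp

lemma rel_init: "rel init_state (0,0,0,0)"
  by (auto simp: rel_def init_state_def)

lemma card_bound:
  assumes "rel s c" shows "card (boundary_vertices s) \<le> tot c + 2"
proof -
  obtain h a h' a' where c: "c = (h, a, h', a')" by (cases c) auto
  from assms obtain vb vr where bs: "fst s = map V vb @ [Z (- int a)]" and lb: "length vb = h"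
    and rs: "fst (snd s) = map V vr @ [Z (1 + int a')]" and lr: "length vr = h'"
    and tr: "\<forall>tr\<in>set (snd (snd s)). \<forall>i. Z i \<in> tri_vertices tr \<longrightarrow> - int a \<le> i \<and> i \<le> 1 + int a'"
    unfolding rel_def c by auto
  have s1: "set (fst s) \<subseteq> V ` set vb \<union> V ` set vr \<union> Z ` {- int a .. 1 + int a'}"
    using bs by auto
  have s2: "set (fst (snd s)) \<subseteq> V ` set vb \<union> V ` set vr \<union> Z ` {- int a .. 1 + int a'}"
    using rs by auto
  have s3: "{v. (\<exists>i. v = Z i) \<and> (\<exists>t\<in>set (disc_triangles s). v \<in> tri_vertices t)}
      \<subseteq> V ` set vb \<union> V ` set vr \<union> Z ` {- int a .. 1 + int a'}"
  proof
    fix v assume "v \<in> {v. (\<exists>i. v = Z i) \<and> (\<exists>t\<in>set (disc_triangles s). v \<in> tri_vertices t)}"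
    then obtain i t where v: "v = Z i" and t: "t \<in> set (snd (snd s))" "Z i \<in> tri_vertices t"
      by (auto simp: disc_triangles_def)
    with tr have "i \<in> {- int a .. 1 + int a'}" by auto
    with v show "v \<in> V ` set vb \<union> V ` set vr \<union> Z ` {- int a .. 1 + int a'}" by blast
  qed
  have sub: "boundary_vertices s \<subseteq> V ` set vb \<union> V ` set vr \<union> Z ` {- int a .. 1 + int a'}"
  proof (cases "disc_triangles s = []")
    case True then show ?thesis by (simp add: boundary_vertices_def)
  next
    case False then show ?thesis unfolding boundary_vertices_def if_not_P[OF False]
      using s1 s2 s3 by (intro Un_least)
  qed
  have "card (boundary_vertices s) \<le> card (V ` set vb \<union> V ` set vr \<union> Z ` {- int a .. 1 + int a'})"
    by (rule card_mono[OF _ sub]) auto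
  also have "\<dots> \<le> card (V ` set vb) + card (V ` set vr) + card (Z ` {- int a .. 1 + int a'})"
    by (meson card_Un_le le_trans add_le_mono order_refl)
  also have "\<dots> \<le> h + h' + (a + a' + 2)"
  proof -
    have "card (V ` set vb) \<le> h" using lb by (metis card_image_le card_length finite_set le_trans)
    moreover have "card (V ` set vr) \<le> h'" using lr by (metis card_image_le card_length finite_set le_trans)
    moreover have "card (Z ` {- int a .. 1 + int a'}) \<le> a + a' + 2"
      proof -
      have "card (Z ` {- int a .. 1 + int a'}) \<le> card {- int a .. 1 + int a'}"
        by (rule card_image_le) simp
      also have "\<dots> = a + a' + 2" by simp
      finally show ?thesis .
    qed
    ultimately show ?thesis by linarith
  qed
  finally show ?thesis by (simp add: c)
qed

lemma tot_run: "tot (run xs c) \<le> tot c + length xs"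
proof (induction xs arbitrary: c)
  case (Cons x xs)
  have "tot (upd x c) \<le> Suc (tot c)"
    by (cases c; cases x) auto
  with Cons[of "upd x c"] show ?case by simp
qed simp



definition psi :: "real \<Rightarrow> nat \<Rightarrow> nat \<Rightarrow> real" where
  "psi l h a = exp (3 * l / 4 * a) * (exp (l * h) + 7 * exp (- (l * h)))"

fun Phi :: "real \<Rightarrow> cnt \<Rightarrow> real" where
  "Phi l (h, a, h', a') = psi l h a * psi l h' a'"

lemma psi_pos: "psi l h a > 0" unfolding psi_def by (intro mult_pos_pos add_pos_pos) auto

lemma key_ineq:
  fixes l :: real assumes "l \<ge> 0"
  shows "8 * exp (3 * l / 4) \<le> 7 * exp l + exp (- l)"
proof -
  define y where "y = exp (l / 4)"
  have y: "y \<ge> 1" using assms unfolding y_def by simp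
  have e3: "exp (3 * l / 4) = y ^ 3" unfolding y_def by (subst exp_of_nat_mult[symmetric]) simp
  have e4: "exp l = y ^ 4" unfolding y_def by (subst exp_of_nat_mult[symmetric]) simp
  have e5: "exp (- l) = 1 / y ^ 4" using e4 by (simp add: exp_minus field_simps)
  have a1: "4 * y ^ 3 \<le> 3 * y ^ 4 + 1"
  proof -
    have "3 * y ^ 4 + 1 - 4 * y ^ 3 = (y - 1)^2 * (3 * y^2 + 2 * y + 1)"
      by (simp add: power2_eq_square power3_eq_cube power4_eq_xxxx algebra_simps)
    moreover have "(y - 1)^2 * (3 * y^2 + 2 * y + 1) \<ge> 0" using y by simp
    ultimately show ?thesis by linarith
  qed
  have a2: "2 \<le> y ^ 4 + 1 / y ^ 4"
  proof -
    have p: "y ^ 4 > 0" using y by simp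
    have "(y^4 - 1)^2 \<ge> 0" by simp
    hence "2 * y^4 \<le> y^4 * y^4 + 1" by (simp add: power2_eq_square algebra_simps)
    thus ?thesis using p by (simp add: field_simps)
  qed
  show ?thesis unfolding e3 e4 e5 using a1 a2 by linarith
qed

lemma psi_step:
  assumes "l \<ge> 0"
  shows "psi l (Suc h) a + (if 0 < h then psi l (h - 1) a else psi l h (Suc a))
         \<le> (exp l + exp (- l)) * psi l h a"
proof (cases "0 < h")
  case True
  then obtain k where k: "h = Suc k" by (cases h) auto
  have "psi l (Suc h) a + psi l (h - 1) a = (exp l + exp (- l)) * psi l h a"
    unfolding psi_def k
    by (simp add: distrib_left distrib_right exp_add[symmetric] algebra_simps)
  with True show ?thesis by simp
next
  case False
  hence h: "h = 0" by simp
  define E where "E = exp (3 * l / 4 * a)"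
  have E: "E > 0" unfolding E_def by simp
  have lhs: "psi l (Suc h) a + psi l h (Suc a) = E * (exp l + 7 * exp (- l)) + E * exp (3 * l / 4) * 8"
    unfolding psi_def h E_def by (simp add: distrib_left exp_add[symmetric] algebra_simps)
  have rhs: "(exp l + exp (- l)) * psi l h a = (exp l + exp (- l)) * 8 * E"
    unfolding psi_def h E_def by simp
  have "E * (exp l + 7 * exp (- l)) + E * exp (3 * l / 4) * 8 \<le> (exp l + exp (- l)) * 8 * E"
    using mult_left_mono[OF key_ineq[OF assms], of E] E by (simp add: algebra_simps)
  with False show ?thesis using lhs rhs by simp
qed

lemma Phi_step:
  assumes "l \<ge> 0"
  shows "(\<Sum>x\<in>UNIV. Phi l (upd x c)) \<le> 2 * (exp l + exp (- l)) * Phi l c"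
proof -
  obtain h a h' a' where c: "c = (h, a, h', a')" by (cases c) auto
  have B: "psi l (Suc h) a + (if 0 < h then psi l (h - 1) a else psi l h (Suc a))
         \<le> (exp l + exp (- l)) * psi l h a" by (rule psi_step[OF assms])
  have R: "psi l (Suc h') a' + (if 0 < h' then psi l (h' - 1) a' else psi l h' (Suc a'))
         \<le> (exp l + exp (- l)) * psi l h' a'" by (rule psi_step[OF assms])
  have sB: "Phi l (upd LB c) + Phi l (upd Lb c) =
     (psi l (Suc h) a + (if 0 < h then psi l (h - 1) a else psi l h (Suc a))) * psi l h' a'"
    by (simp add: c distrib_right)
  have sR: "Phi l (upd LR c) + Phi l (upd Lr c) =
     psi l h a * (psi l (Suc h') a' + (if 0 < h' then psi l (h' - 1) a' else psi l h' (Suc a')))"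
    by (simp add: c distrib_left)
  have "(\<Sum>x\<in>UNIV. Phi l (upd x c)) = Phi l (upd LB c) + Phi l (upd Lb c) + (Phi l (upd LR c) + Phi l (upd Lr c))"
    by (simp add: UNIV_letter)
  also have "\<dots> \<le> (exp l + exp (- l)) * psi l h a * psi l h' a' + psi l h a * ((exp l + exp (- l)) * psi l h' a')"
    unfolding sB sR
    by (intro add_mono mult_right_mono mult_left_mono B R) (auto intro: less_imp_le psi_pos)
  also have "\<dots> = 2 * (exp l + exp (- l)) * Phi l c" by (simp add: c algebra_simps)
  finally show ?thesis .
qed

lemma words_Suc: "{xs :: letter list. length xs = Suc n} = (\<lambda>(x, xs). x # xs) ` (UNIV \<times> {xs. length xs = n})"
  by (auto simp: length_Suc_conv image_iff)

lemma sum_words: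
  assumes "l \<ge> 0"
  shows "(\<Sum>xs\<in>{xs :: letter list. length xs = n}. Phi l (run xs c)) \<le> (2 * (exp l + exp (- l))) ^ n * Phi l c"
proof (induction n arbitrary: c)
  case 0
  have "{xs :: letter list. length xs = 0} = {[]}" by auto
  thus ?case by simp
next
  case (Suc n)
  have inj: "inj_on (\<lambda>(x, xs). x # xs) (UNIV \<times> {xs :: letter list. length xs = n})"
    by (auto simp: inj_on_def)
  have "(\<Sum>xs\<in>{xs :: letter list. length xs = Suc n}. Phi l (run xs c))
      = (\<Sum>p\<in>UNIV \<times> {xs :: letter list. length xs = n}. Phi l (run ((\<lambda>(x, xs). x # xs) p) c))"
    unfolding words_Suc by (subst sum.reindex[OF inj]) (simp add: comp_def)
  also have "\<dots> = (\<Sum>x\<in>UNIV. \<Sum>xs\<in>{xs :: letter list. length xs = n}. Phi l (run xs (upd x c)))"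
    by (subst sum.cartesian_product) (simp add: case_prod_beta)
  also have "\<dots> \<le> (\<Sum>x\<in>UNIV. (2 * (exp l + exp (- l))) ^ n * Phi l (upd x c))"
    by (intro sum_mono Suc.IH)
  also have "\<dots> = (2 * (exp l + exp (- l))) ^ n * (\<Sum>x\<in>UNIV. Phi l (upd x c))"
    by (simp add: sum_distrib_left)
  also have "\<dots> \<le> (2 * (exp l + exp (- l))) ^ n * (2 * (exp l + exp (- l)) * Phi l c)"
    by (intro mult_left_mono Phi_step[OF assms]) (simp add: add_nonneg_nonneg)
  also have "\<dots> = (2 * (exp l + exp (- l))) ^ Suc n * Phi l c" by simp
  finally show ?case .
qed

lemma Phi_lower:
  assumes "l \<ge> 0"
  shows "exp (3 * l / 4 * tot c) \<le> Phi l c"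
proof -
  have ps: "exp (3 * l / 4 * (real h + real a)) \<le> psi l h a" for h a
  proof -
    have "exp (3 * l / 4 * (real h + real a)) = exp (3 * l / 4 * a) * exp (3 * l / 4 * h)"
      by (simp add: exp_add[symmetric] algebra_simps)
    also have "\<dots> \<le> exp (3 * l / 4 * a) * (exp (l * h) + 7 * exp (- (l * h)))"
      using assms by (intro mult_left_mono) (auto intro: add_increasing2 simp: mult_right_mono)
    finally show ?thesis unfolding psi_def .
  qed
  obtain h a h' a' where c: "c = (h, a, h', a')" by (cases c) auto
  have "exp (3 * l / 4 * tot c) = exp (3 * l / 4 * (real h + real a)) * exp (3 * l / 4 * (real h' + real a'))"
    by (simp add: c exp_add[symmetric]) (simp add: field_simps)
  also have "\<dots> \<le> psi l h a * psi l h' a'"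
    by (intro mult_mono ps) (auto intro: less_imp_le psi_pos)
  finally show ?thesis by (simp add: c)
qed

lemma Phi_nonneg: "Phi l c \<ge> 0" by (cases c) (simp add: less_imp_le psi_pos)

lemma Phi0: "Phi l (0,0,0,0) = 64" by (simp add: psi_def)



lemma cosh_bound: fixes l :: real assumes "l > 0"
  shows "(exp l + exp (-l)) / 2 \<le> exp (l^2 / 2)"
proof -
  let ?M = "measure_pmf (pmf_of_set {-1, 1::real})"
  interpret interval_bounded_random_variable ?M "\<lambda>x. x" "-1" "1"
    by unfold_locales (auto simp: prob_space_measure_pmf AE_measure_pmf_iff)
  have E0: "integral\<^sup>L ?M (\<lambda>x. x) = 0"
    by (subst integral_pmf_of_set) auto
  have "nn_integral ?M (\<lambda>x. exp (l * x)) \<le> ennreal (exp (l\<^sup>2 * (1 - (-1))\<^sup>2 / 8))"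
    by (rule Hoeffdings_lemma_nn_integral_0[OF assms E0])
  moreover have "nn_integral ?M (\<lambda>x. exp (l * x)) = (\<Sum>x\<in>{-1,1::real}. ennreal (exp (l * x))) / of_nat (card {-1,1::real})"
    by (rule nn_integral_pmf_of_set) auto
  moreover have "(\<Sum>x\<in>{-1,1::real}. ennreal (exp (l * x))) = ennreal (exp (-l) + exp l)"
    by (simp add: ennreal_plus)
  moreover have "of_nat (card {-1,1::real}) = (2::ennreal)" by simp
  moreover have "ennreal (exp (-l) + exp l) / ennreal 2 = ennreal ((exp (-l) + exp l) / 2)"
    by (rule divide_ennreal) auto
  ultimately have "ennreal ((exp (-l) + exp l) / 2) \<le> ennreal (exp (l\<^sup>2 * (1 - (-1))\<^sup>2 / 8))"
    by (metis ennreal_numeral)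
  hence "(exp (-l) + exp l) / 2 \<le> exp (l\<^sup>2 * (1 - (-1))\<^sup>2 / 8)"
    by (subst (asm) ennreal_le_iff) auto
  thus ?thesis by (simp add: power2_eq_square add.commute)
qed

definition Ev :: "real \<Rightarrow> nat \<Rightarrow> letter list set" where
  "Ev t n = {xs. length xs = n \<and> t * sqrt (real n) \<le> real (card (boundary_vertices (disc xs)))}"

lemma card_words: "card {xs :: letter list. length xs = n} = 4 ^ n"
proof -
  have "{xs. set xs \<subseteq> (UNIV :: letter set) \<and> length xs = n} = {xs. length xs = n}" by auto
  moreover have "card (UNIV :: letter set) = 4" by (simp add: UNIV_letter)
  ultimately show ?thesis using card_lists_length_eq[of "UNIV :: letter set" n] by simp
qed

lemma prob_eq:
  "measure_pmf.prob (word_root_pmf n)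
           {(xs, k). real (card (bdry (T xs k))) \<ge> t * sqrt (real n)} = card (Ev t n) / 4 ^ n"
proof -
  let ?W = "{xs :: letter list. length xs = n}"
  have fin: "finite ?W" by (rule finite_list_length)
  have ne: "?W \<noteq> {}" by (auto intro: exI[of _ "replicate n LB"])
  have "{(xs, k). real (card (bdry (T xs k))) \<ge> t * sqrt (real n)}
      = fst -` {xs. t * sqrt (real n) \<le> real (card (boundary_vertices (disc xs)))}"
    by (auto simp: bdry_def T_def)
  hence "measure_pmf.prob (word_root_pmf n) {(xs, k). real (card (bdry (T xs k))) \<ge> t * sqrt (real n)}
     = measure_pmf.prob (map_pmf fst (word_root_pmf n)) {xs. t * sqrt (real n) \<le> real (card (boundary_vertices (disc xs)))}"
    by simp
  also have "\<dots> = measure_pmf.prob (pmf_of_set ?W) {xs. t * sqrt (real n) \<le> real (card (boundary_vertices (disc xs)))}"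
    by (simp add: word_root_pmf_def map_fst_pair_pmf)
  also have "\<dots> = card (?W \<inter> {xs. t * sqrt (real n) \<le> real (card (boundary_vertices (disc xs)))}) / card ?W"
    by (rule measure_pmf_of_set[OF ne fin])
  also have "?W \<inter> {xs. t * sqrt (real n) \<le> real (card (boundary_vertices (disc xs)))} = Ev t n"
    by (auto simp: Ev_def)
  finally show ?thesis by (simp add: card_words)
qed

lemma disc_bound: "card (boundary_vertices (disc xs)) \<le> tot (run xs (0,0,0,0)) + 2"
  unfolding disc_def by (rule card_bound[OF rel_build[OF rel_init]])

lemma card_Ev_bound:
  assumes l: "l \<ge> 0"
  shows "real (card (Ev t n)) * exp (3 * l / 4 * (t * sqrt (real n) - 2))
         \<le> (2 * (exp l + exp (- l))) ^ n * 64"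
proof -
  let ?W = "{xs :: letter list. length xs = n}"
  have fin: "finite ?W" by (rule finite_list_length)
  have sub: "Ev t n \<subseteq> ?W" by (auto simp: Ev_def)
  have "real (card (Ev t n)) * exp (3 * l / 4 * (t * sqrt (real n) - 2))
      = (\<Sum>xs\<in>Ev t n. exp (3 * l / 4 * (t * sqrt (real n) - 2)))" by simp
  also have "\<dots> \<le> (\<Sum>xs\<in>Ev t n. Phi l (run xs (0,0,0,0)))"
  proof (intro sum_mono)
    fix xs assume xs: "xs \<in> Ev t n"
    have "t * sqrt (real n) - 2 \<le> real (tot (run xs (0,0,0,0)))"
      using xs disc_bound[of xs] unfolding Ev_def by simp
    hence "exp (3 * l / 4 * (t * sqrt (real n) - 2)) \<le> exp (3 * l / 4 * tot (run xs (0,0,0,0)))"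
      using l by (simp add: mult_left_mono)
    also have "\<dots> \<le> Phi l (run xs (0,0,0,0))" by (rule Phi_lower[OF l])
    finally show "exp (3 * l / 4 * (t * sqrt (real n) - 2)) \<le> Phi l (run xs (0,0,0,0))" .
  qed
  also have "\<dots> \<le> (\<Sum>xs\<in>?W. Phi l (run xs (0,0,0,0)))"
    by (rule sum_mono2[OF fin sub]) (auto intro: less_imp_le psi_pos Phi_nonneg)
  also have "\<dots> \<le> (2 * (exp l + exp (- l))) ^ n * Phi l (0,0,0,0)" by (rule sum_words[OF l])
  finally show ?thesis by (simp only: Phi0)
qed



lemma exp_small: "exp (81 / 128 :: real) \<le> 2"
proof -
  have "1 + (- (81/1024)) \<le> exp (- (81/1024::real))" by (rule exp_ge_add_one_self)
  hence a: "943/1024 \<le> exp (- (81/1024::real))" by simp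
  have "exp (81/1024::real) = 1 / exp (- (81/1024))" by (simp add: exp_minus inverse_eq_divide)
  also have "\<dots> \<le> 1 / (943/1024)" using a by (intro divide_left_mono) auto
  finally have b: "exp (81/1024::real) \<le> 1024/943" by simp
  have "exp (81 / 128 :: real) = exp (81/1024) ^ 8"
    by (subst exp_of_nat_mult[symmetric]) simp
  also have "\<dots> \<le> (1024/943) ^ 8" by (intro power_mono b) auto
  also have "(1024/943::real) ^ 8 = 1024 ^ 8 / 943 ^ 8" by (simp add: power_divide)
  also have "\<dots> \<le> (2::real)" by simp
  finally show ?thesis .
qed

lemma exp_big: "32 \<le> exp (15 / 4 :: real)"
proof -
  have "1 + 1/8 \<le> exp (1/8::real)" by (rule exp_ge_add_one_self)
  hence a: "9/8 \<le> exp (1/8::real)" by simp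
  have "(9/8::real) ^ 30 = 9 ^ 30 / 8 ^ 30" by (simp add: power_divide)
  hence "(32::real) \<le> (9/8) ^ 30" by simp
  also have "\<dots> \<le> exp (1/8) ^ 30" by (intro power_mono a) auto
  also have "\<dots> = exp (15/4 :: real)" by (subst exp_of_nat_mult[symmetric]) simp
  finally show ?thesis .
qed

theorem lemma3p5:
  fixes n :: nat and t :: real
  assumes "n \<ge> 1" and "t > 0"
  shows "measure_pmf.prob (word_root_pmf n)
           {(xs, k). real (card (bdry (T xs k))) \<ge> t * sqrt (real n)}
         \<le> 2 * exp (- (t ^ 2) / 32)"
proof -
  let ?P = "measure_pmf.prob (word_root_pmf n)
           {(xs, k). real (card (bdry (T xs k))) \<ge> t * sqrt (real n)}"
  define u where "u = sqrt (real n)"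
  have u1: "u \<ge> 1" using assms(1) by (simp add: u_def)
  have un: "u ^ 2 = real n" by (simp add: u_def)
  have P: "?P = card (Ev t n) / 4 ^ n" by (rule prob_eq)
  have P1: "?P \<le> 1" by (rule measure_pmf.prob_le_1)
  consider "t \<le> 9/2" | "t > 9/2" "u < 4" | "t > 9/2" "u \<ge> 4" by linarith
  then show ?thesis
  proof cases
    case 1
    have "t * t \<le> 9/2 * (9/2)" using 1 assms(2) by (intro mult_mono) auto
    hence "t ^ 2 / 32 \<le> 81 / 128" by (simp add: power2_eq_square)
    hence "exp (t ^ 2 / 32) \<le> 2" using exp_small by (meson exp_le_cancel_iff order_trans)
    hence "1 \<le> 2 * exp (- (t ^ 2) / 32)" by (simp add: exp_minus field_simps)
    with P1 show ?thesis by linarith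
  next
    case 2
    have "Ev t n = {}"
    proof (rule ccontr)
      assume "Ev t n \<noteq> {}"
      then obtain xs where xs: "xs \<in> Ev t n" by blast
      have len: "length xs = n" using xs by (simp add: Ev_def)
      have "tot (run xs (0,0,0,0)) \<le> n" using tot_run[of xs "(0,0,0,0)"] len by simp
      with disc_bound[of xs] have c: "real (card (boundary_vertices (disc xs))) \<le> real n + 2" by simp
      have "0 \<le> (4 - u) * (u - 1/2)" using 2 u1 by (intro mult_nonneg_nonneg) auto
      hence "u ^ 2 + 2 \<le> 9/2 * u" by (simp add: power2_eq_square algebra_simps)
      also have "\<dots> < t * u" using 2 u1 by (intro mult_strict_right_mono) auto
      finally have "real n + 2 < t * u" using un by simp
      with c xs show False by (simp add: Ev_def u_def)
    qed
    with P show ?thesis by simp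
  next
    case 3
    define l where "l = 3 * t / (4 * u)"
    have l0: "l > 0" using assms(2) u1 by (simp add: l_def)
    define X where "X = exp (3 * l / 4 * (t * u - 2))"
    have X0: "X > 0" by (simp add: X_def)
    have cb: "real (card (Ev t n)) * X \<le> (2 * (exp l + exp (- l))) ^ n * 64"
      using card_Ev_bound[of l t n] l0 by (simp add: X_def u_def)
    have "?P = real (card (Ev t n)) * X / (4 ^ n * X)" using P X0 by simp
    also have "\<dots> \<le> (2 * (exp l + exp (- l))) ^ n * 64 / (4 ^ n * X)"
      using cb X0 by (intro divide_right_mono) auto
    also have "\<dots> = 64 * ((exp l + exp (- l)) / 2) ^ n / X"
    proof -
      have "(2 * (exp l + exp (- l))) = (4 * ((exp l + exp (- l)) / 2))" by simp
      hence "(2 * (exp l + exp (- l))) ^ n = (4 * ((exp l + exp (- l)) / 2)) ^ n" by (simp only:)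
      also have "\<dots> = 4 ^ n * ((exp l + exp (- l)) / 2) ^ n" by (rule power_mult_distrib)
      finally have e: "(2 * (exp l + exp (- l))) ^ n = 4 ^ n * ((exp l + exp (- l)) / 2) ^ n" .
      have p: "(4::real) ^ n > 0" by simp
      show ?thesis unfolding e using p X0 by (simp add: field_simps)
    qed
    also have "\<dots> \<le> 64 * exp (l ^ 2 / 2) ^ n / X"
      using cosh_bound[OF l0] X0
      by (intro divide_right_mono mult_left_mono power_mono) (auto intro: add_nonneg_nonneg)
    also have "\<dots> = 64 * exp (real n * (l ^ 2 / 2) - 3 * l / 4 * (t * u - 2))"
      by (simp add: X_def exp_diff exp_of_nat_mult[symmetric])
    also have "real n * (l ^ 2 / 2) - 3 * l / 4 * (t * u - 2) = - 9 * t ^ 2 / 32 + 9 * t / (8 * u)"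
      using u1 un[symmetric] by (simp add: l_def power2_eq_square field_simps)
    also have "64 * exp (- 9 * t ^ 2 / 32 + 9 * t / (8 * u)) \<le> 2 * exp (- (t ^ 2) / 32)"
    proof -
      have tu: "t / u \<le> t / 4" using 3 assms(2) by (intro divide_left_mono) auto
      have q: "0 \<le> (t - 9/2) * (t/4 + 27/32)" using 3 by (intro mult_nonneg_nonneg) auto
      have A: "9 * t / (8 * u) \<le> 9 * t / 32"
      proof -
        have "9 * t / (8 * u) = 9/8 * (t / u)" by simp
        also have "\<dots> \<le> 9/8 * (t / 4)" using tu by simp
        finally show ?thesis by simp
      qed
      have B: "0 \<le> t ^ 2 / 4 - 9 * t / 32 - 15/4"
      proof -
        have "t ^ 2 / 4 - 9 * t / 32 - 15/4 = (t - 9/2) * (t/4 + 27/32) + 3/64"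
          by (simp add: power2_eq_square field_simps)
        thus ?thesis using q by linarith
      qed
      have "- 9 * t ^ 2 / 32 + 9 * t / (8 * u) \<le> - (t ^ 2) / 32 - 15/4"
        using A B by linarith
      hence "exp (- 9 * t ^ 2 / 32 + 9 * t / (8 * u)) \<le> exp (- (t ^ 2) / 32) / exp (15/4)"
        by (simp add: exp_diff[symmetric])
      also have "\<dots> \<le> exp (- (t ^ 2) / 32) / 32"
        using exp_big by (intro divide_left_mono) auto
      finally show ?thesis by simp
    qed
    finally show ?thesis .
  qed
qed


end
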